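(* For $n\ge3$, $$\mathcal{K}_n(\lambda)=\lambda\,\mathcal{A}_{n-1}(\lambda)-\lambda^2\,\mathcal{A}_{n-3}(\lambda).$$
   Context: For $n\ge3$, $\mathcal{K}_n(\lambda)=\det(\lambda I_n-M_n)$, where $(M_n)_{j,i}=1$ if $i\ge j-1$ or $(j,i)=(n,n-2)$, and $0$ otherwise. For $n\ge1$, $\mathcal{A}_n(\lambda)=\det(\lambda I_n-N_n)$ with $(N_n)_{j,i}=1$ if $i\ge j-1$ and $0$ otherwise; $\mathcal{A}_0(\lambda)=1$. *)

theory Defs
  imports "Jordan_Normal_Form.Char_Poly"
begin

text \<open>Matrices use 0-based indices: entry (j,i) of the paper (1-based) is entry (j-1,i-1) here.
  The condition i \<ge> j - 1 becomes i + 1 \<ge> j, and the extra entry (n, n-2) becomes (n-1, n-3).\<close>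

definition N_mat :: "nat \<Rightarrow> 'a :: comm_ring_1 mat" where
  "N_mat n = mat n n (\<lambda>(j, i). if j \<le> i + 1 then 1 else 0)"

definition M_mat :: "nat \<Rightarrow> 'a :: comm_ring_1 mat" where
  "M_mat n = mat n n (\<lambda>(j, i). if j \<le> i + 1 \<or> (j = n - 1 \<and> i = n - 3) then 1 else 0)"

definition K_poly :: "nat \<Rightarrow> 'a :: comm_ring_1 poly" where
  "K_poly n = char_poly (M_mat n :: 'a mat)"

definition A_poly :: "nat \<Rightarrow> 'a :: comm_ring_1 poly" where
  "A_poly n = char_poly (N_mat n :: 'a mat)"

end

theory Submission
  imports Defs
begin

definition tt :: "nat \<Rightarrow> nat \<Rightarrow> 'a :: comm_ring_1 poly" where
  "tt j i = (if j = i then [:0,1:] else 0) - (if j \<le> i + 1 then 1 else 0)"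

definition TT :: "nat \<Rightarrow> 'a :: comm_ring_1 poly mat" where
  "TT m = mat m m (\<lambda>(j,i). tt j i)"

definition EE :: "nat \<Rightarrow> 'a :: comm_ring_1 poly mat" where
  "EE m = mat m m (\<lambda>(j,i). if i = m - 1 then -1 else tt j i)"

definition SS :: "nat \<Rightarrow> 'a :: comm_ring_1 poly mat" where
  "SS n = mat n n (\<lambda>(j,i). tt j i - (if j = n - 1 \<and> i = n - 3 then 1 else 0))"

definition FF :: "nat \<Rightarrow> 'a :: comm_ring_1 poly mat" where
  "FF m = mat m m (\<lambda>(j,i). if i < m - 2 then tt j i else if i = m - 2 then tt j (m - 1) else -1)"

lemma neg1_even: "(-1::'b::comm_ring_1)^(k+k) = 1"
  by (simp add: power_add[symmetric] flip: mult_2)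

lemma neg1_odd: "(-1::'b::comm_ring_1)^(Suc (k+k)) = -1"
  by (simp add: neg1_even)

lemma lastrow2:
  fixes A :: "'b :: comm_ring_1 mat"
  assumes A: "A \<in> carrier_mat (Suc m) (Suc m)" and m: "m \<ge> 1"
    and z: "\<And>j. j < m - 1 \<Longrightarrow> A $$ (m, j) = 0"
  shows "det A = A $$ (m,m) * det (mat_delete A m m)
                 - A $$ (m, m-1) * det (mat_delete A m (m-1))"
proof -
  obtain p where p: "m = Suc p" using m by (cases m) auto
  have "det A = (\<Sum>j<Suc m. A $$ (m,j) * cofactor A m j)"
    by (rule laplace_expansion_row[OF A]) simp
  also have "\<dots> = (\<Sum>j<p. A $$ (m,j) * cofactor A m j) + A $$ (m,p) * cofactor A m p
       + A $$ (m,m) * cofactor A m m"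
    by (simp add: p)
  also have "(\<Sum>j<p. A $$ (m,j) * cofactor A m j) = 0"
    using z p by (intro sum.neutral) auto
  finally show ?thesis
    by (simp add: cofactor_def p neg1_even neg1_odd flip: add_Suc_right)
qed

lemma lastrow3:
  fixes A :: "'b :: comm_ring_1 mat"
  assumes A: "A \<in> carrier_mat (Suc m) (Suc m)" and m: "m \<ge> 2"
    and z: "\<And>j. j < m - 2 \<Longrightarrow> A $$ (m, j) = 0"
  shows "det A = A $$ (m,m) * det (mat_delete A m m)
                 - A $$ (m, m-1) * det (mat_delete A m (m-1))
                 + A $$ (m, m-2) * det (mat_delete A m (m-2))"
proof -
  obtain p where p: "m = Suc (Suc p)" using m by (metis add_2_eq_Suc le_Suc_ex)
  have "det A = (\<Sum>j<Suc m. A $$ (m,j) * cofactor A m j)"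
    by (rule laplace_expansion_row[OF A]) simp
  also have "\<dots> = (\<Sum>j<p. A $$ (m,j) * cofactor A m j) + A $$ (m,p) * cofactor A m p
       + A $$ (m,Suc p) * cofactor A m (Suc p) + A $$ (m,m) * cofactor A m m"
    by (simp add: p)
  also have "(\<Sum>j<p. A $$ (m,j) * cofactor A m j) = 0"
    using z p by (intro sum.neutral) auto
  finally show ?thesis
    by (simp add: cofactor_def p neg1_even neg1_odd power_add)
qed


lemma TT_carrier[simp]: "TT m \<in> carrier_mat m m" by (simp add: TT_def)
lemma EE_carrier[simp]: "EE m \<in> carrier_mat m m" by (simp add: EE_def)
lemma SS_carrier[simp]: "SS m \<in> carrier_mat m m" by (simp add: SS_def)
lemma FF_carrier[simp]: "FF m \<in> carrier_mat m m" by (simp add: FF_def)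

lemma L1: assumes "m \<ge> 1"
  shows "det (TT (Suc m)) = ([:0,1:] - 1) * det (TT m) + det (EE m :: 'a :: comm_ring_1 poly mat)"
proof -
  have d1: "mat_delete (TT (Suc m)) m m = (TT m :: 'a poly mat)"
    by (rule eq_matI) (auto simp: mat_delete_def TT_def)
  have d2: "mat_delete (TT (Suc m)) m (m-1) = (EE m :: 'a poly mat)"
    using assms by (intro eq_matI) (auto simp: mat_delete_def TT_def EE_def tt_def)
  have "det (TT (Suc m) :: 'a poly mat) = TT (Suc m) $$ (m,m) * det (mat_delete (TT (Suc m)) m m)
                 - TT (Suc m) $$ (m, m-1) * det (mat_delete (TT (Suc m)) m (m-1))"
    by (rule lastrow2) (use assms in \<open>auto simp: TT_def tt_def\<close>)
  also have "\<dots> = ([:0,1:] - 1) * det (TT m) + det (EE m :: 'a :: comm_ring_1 poly mat)"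
  proof -
    have e1: "TT (Suc m) $$ (m,m) = ([:0,1:] - 1 :: 'a poly)" by (simp add: TT_def tt_def)
    have e2: "TT (Suc m) $$ (m,m-1) = (- 1 :: 'a poly)" using assms by (simp add: TT_def tt_def)
    show ?thesis by (simp only: d1 d2 e1 e2) simp
  qed
  finally show ?thesis .
qed

lemma L2: assumes "m \<ge> 1"
  shows "det (EE (Suc m)) = - det (TT m) + det (EE m :: 'a :: comm_ring_1 poly mat)"
proof -
  have d1: "mat_delete (EE (Suc m)) m m = (TT m :: 'a poly mat)"
    by (rule eq_matI) (auto simp: mat_delete_def TT_def EE_def)
  have d2: "mat_delete (EE (Suc m)) m (m-1) = (EE m :: 'a poly mat)"
    using assms by (intro eq_matI) (auto simp: mat_delete_def EE_def tt_def)
  have "det (EE (Suc m) :: 'a poly mat) = EE (Suc m) $$ (m,m) * det (mat_delete (EE (Suc m)) m m)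
                 - EE (Suc m) $$ (m, m-1) * det (mat_delete (EE (Suc m)) m (m-1))"
    by (rule lastrow2) (use assms in \<open>auto simp: EE_def tt_def\<close>)
  also have "\<dots> = - det (TT m) + det (EE m :: 'a :: comm_ring_1 poly mat)"
  proof -
    have e1: "EE (Suc m) $$ (m,m) = (- 1 :: 'a poly)" by (simp add: EE_def tt_def)
    have e2: "EE (Suc m) $$ (m,m-1) = (- 1 :: 'a poly)" using assms by (simp add: EE_def tt_def)
    show ?thesis by (simp only: d1 d2 e1 e2) simp
  qed
  finally show ?thesis .
qed

lemma L4: assumes "k \<ge> 1"
  shows "det (FF (Suc k)) = - [:0,1:] * det (EE k :: 'a :: comm_ring_1 poly mat)"
proof -
  have d1: "mat_delete (FF (Suc k)) k k = (EE k :: 'a poly mat)"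
    using assms by (intro eq_matI) (auto simp: mat_delete_def FF_def EE_def tt_def)
  have d2: "mat_delete (FF (Suc k)) k (k-1) = (EE k :: 'a poly mat)"
    using assms by (intro eq_matI) (auto simp: mat_delete_def FF_def EE_def tt_def)
  have "det (FF (Suc k) :: 'a poly mat) = FF (Suc k) $$ (k,k) * det (mat_delete (FF (Suc k)) k k)
                 - FF (Suc k) $$ (k, k-1) * det (mat_delete (FF (Suc k)) k (k-1))"
    by (rule lastrow2) (use assms in \<open>auto simp: FF_def tt_def\<close>)
  also have "\<dots> = - [:0,1:] * det (EE k :: 'a :: comm_ring_1 poly mat)"
  proof -
    have e1: "FF (Suc k) $$ (k,k) = (- 1 :: 'a poly)" using assms by (auto simp: FF_def tt_def)
    have e2: "FF (Suc k) $$ (k,k-1) = ([:0,1:] - 1 :: 'a poly)" using assms by (auto simp: FF_def tt_def)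
    show ?thesis by (simp only: d1 d2 e1 e2) (simp add: algebra_simps)
  qed
  finally show ?thesis .
qed

lemma L3: assumes "m \<ge> 2"
  shows "det (SS (Suc m)) = ([:0,1:] - 1) * det (TT m) + det (EE m) - det (FF m :: 'a :: comm_ring_1 poly mat)"
proof -
  have d1: "mat_delete (SS (Suc m)) m m = (TT m :: 'a poly mat)"
    by (rule eq_matI) (auto simp: mat_delete_def TT_def SS_def)
  have d2: "mat_delete (SS (Suc m)) m (m-1) = (EE m :: 'a poly mat)"
    using assms by (intro eq_matI) (auto simp: mat_delete_def SS_def EE_def tt_def)
  have d3: "mat_delete (SS (Suc m)) m (m-2) = (FF m :: 'a poly mat)"
    using assms by (intro eq_matI) (auto simp: mat_delete_def SS_def FF_def tt_def)
  have "det (SS (Suc m) :: 'a poly mat) = SS (Suc m) $$ (m,m) * det (mat_delete (SS (Suc m)) m m)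
                 - SS (Suc m) $$ (m, m-1) * det (mat_delete (SS (Suc m)) m (m-1))
                 + SS (Suc m) $$ (m, m-2) * det (mat_delete (SS (Suc m)) m (m-2))"
    by (rule lastrow3) (use assms in \<open>auto simp: SS_def tt_def\<close>)
  also have "\<dots> = ([:0,1:] - 1) * det (TT m) + det (EE m) - det (FF m :: 'a :: comm_ring_1 poly mat)"
  proof -
    have e1: "SS (Suc m) $$ (m,m) = ([:0,1:] - 1 :: 'a poly)" using assms by (auto simp: SS_def tt_def)
    have e2: "SS (Suc m) $$ (m,m-1) = (- 1 :: 'a poly)" using assms by (auto simp: SS_def tt_def)
    have e3: "SS (Suc m) $$ (m,m-2) = (- 1 :: 'a poly)" using assms by (auto simp: SS_def tt_def)
    show ?thesis by (simp only: d1 d2 d3 e1 e2 e3) simp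
  qed
  finally show ?thesis .
qed


lemma det_one_one:
  fixes A :: "'b :: comm_ring_1 mat"
  assumes A: "A \<in> carrier_mat 1 1"
  shows "det A = A $$ (0,0)"
proof -
  have "det A = (\<Sum>j<1. A $$ (0,j) * cofactor A 0 j)"
    by (rule laplace_expansion_row[OF A]) simp
  also have "\<dots> = A $$ (0,0) * det (mat_delete A 0 0)" by (simp add: cofactor_def)
  also have "det (mat_delete A 0 0) = 1"
    using mat_delete_carrier[OF A] by simp
  finally show ?thesis by simp
qed

lemma pm1: "[:- 1:] = (- 1 :: 'a::comm_ring_1 poly)"
  by (rule poly_eqI) (simp add: coeff_pCons split: nat.split)
lemma pm2: "pCons (- 1) 1 = [:0,1:] - (1 :: 'a::comm_ring_1 poly)"
  by (rule poly_eqI) (simp add: coeff_pCons split: nat.split)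

lemma fin: fixes K x a0 a1 a2 e1 e2 f :: "'b::comm_ring_1"
  assumes h1: "K = (x-1)*a2 + e2 - f" and h2: "f = -x*e1" and h3: "e2 = -a1 + e1"
    and h4: "a2 = (x-1)*a1 + e1" and h5: "a2 = x*a1 - x*a0"
  shows "K = x*a2 - x*x*a0"
proof -
  have e1: "e1 = a2 - (x-1)*a1" using h4 by (simp add: algebra_simps)
  have "K = (x-1)*a2 - a1 + (1+x)*(a2 - (x-1)*a1)" using h1 h2 h3 e1 by (simp add: algebra_simps)
  also have "\<dots> = 2*x*a2 - x*x*a1" by (simp add: algebra_simps)
  also have "\<dots> = x*a2 - x*x*a0" by (subst (1 2) h5) (simp add: algebra_simps)
  finally show ?thesis .
qed

lemma T0: "det (TT 0 :: 'a :: comm_ring_1 poly mat) = 1"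
  by simp
lemma T1: "det (TT 1 :: 'a :: comm_ring_1 poly mat) = [:0,1:] - 1"
  by (subst det_one_one) (auto simp: TT_def tt_def)
lemma E1: "det (EE 1 :: 'a :: comm_ring_1 poly mat) = - 1"
  by (subst det_one_one) (auto simp: EE_def tt_def)

lemma Trec: "det (TT (Suc (Suc k)) :: 'a :: comm_ring_1 poly mat)
   = [:0,1:] * det (TT (Suc k)) - [:0,1:] * det (TT k)"
proof (cases k)
  case 0
  have aux: "\<And>a y :: 'a poly. a = (y - 1) * (y - 1) + - 1 \<Longrightarrow> a = y * (y - 1) - y * 1"
    by (simp add: algebra_simps)
  have "det (TT (Suc (Suc 0)) :: 'a poly mat) = ([:0,1:] - 1) * det (TT (Suc 0)) + det (EE (Suc 0))"
    by (rule L1) simp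
  then have "det (TT (Suc (Suc 0)) :: 'a poly mat) = ([:0,1:] - 1) * ([:0,1:] - 1) + - 1"
    by (metis One_nat_def T1 E1)
  then have "det (TT (Suc (Suc 0)) :: 'a poly mat) = [:0,1:] * ([:0,1:] - 1) - [:0,1:] * 1"
    by (rule aux)
  then show ?thesis using 0 T1 T0 by (metis One_nat_def)
next
  case (Suc p)
  have a: "det (TT (Suc (Suc k)) :: 'a poly mat) = ([:0,1:] - 1) * det (TT (Suc k)) + det (EE (Suc k))"
    by (rule L1) simp
  have b: "det (EE (Suc k) :: 'a poly mat) = - det (TT k) + det (EE k)"
    by (rule L2) (simp add: Suc)
  have c: "det (TT (Suc k) :: 'a poly mat) = ([:0,1:] - 1) * det (TT k) + det (EE k)"
    by (rule L1) (simp add: Suc)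
  show ?thesis using a b c by (simp add: algebra_simps)
qed

lemma charA: "A_poly m = det (TT m :: 'a :: comm_ring_1 poly mat)"
  unfolding A_poly_def char_poly_def char_poly_matrix_def
  by (rule arg_cong[where f=det], rule eq_matI) (auto simp: N_mat_def TT_def tt_def pm1 pm2)

lemma charK: "m \<ge> 3 \<Longrightarrow> K_poly m = det (SS m :: 'a :: comm_ring_1 poly mat)"
  unfolding K_poly_def char_poly_def char_poly_matrix_def
  by (rule arg_cong[where f=det], rule eq_matI) (auto simp: M_mat_def SS_def tt_def pm1 pm2)

theorem lemma4:
  fixes n :: nat
  assumes "n \<ge> 3"
  shows "(K_poly n :: 'a :: comm_ring_1 poly)
           = [:0, 1:] * A_poly (n - 1) - [:0, 0, 1:] * A_poly (n - 3)"
proof -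
  define p where "p = n - 3"
  have n: "n = Suc (Suc (Suc p))" using assms by (simp add: p_def)
  define x :: "'a poly" where "x = [:0,1:]"
  have xx: "[:0, 0, 1:] = x * x" by (simp add: x_def)
  have s: "det (SS (Suc (Suc (Suc p))) :: 'a poly mat) = (x - 1) * det (TT (Suc (Suc p)))
      + det (EE (Suc (Suc p))) - det (FF (Suc (Suc p)))"
    unfolding x_def by (rule L3) simp
  have f: "det (FF (Suc (Suc p)) :: 'a poly mat) = - x * det (EE (Suc p))"
    unfolding x_def by (rule L4) simp
  have e: "det (EE (Suc (Suc p)) :: 'a poly mat) = - det (TT (Suc p)) + det (EE (Suc p))"
    by (rule L2) simp
  have a: "det (TT (Suc (Suc p)) :: 'a poly mat) = (x - 1) * det (TT (Suc p)) + det (EE (Suc p))"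
    unfolding x_def by (rule L1) simp
  have r: "det (TT (Suc (Suc p)) :: 'a poly mat) = x * det (TT (Suc p)) - x * det (TT p)"
    unfolding x_def by (rule Trec)
  have "K_poly n = (det (SS (Suc (Suc (Suc p)))) :: 'a poly)" using charK[of n] assms by (simp add: n)
  also have "\<dots> = x * det (TT (Suc (Suc p))) - x * x * det (TT p :: 'a poly mat)"
    by (rule fin[OF s f e a r])
  also have "\<dots> = [:0, 1:] * A_poly (n - 1) - [:0, 0, 1:] * A_poly (n - 3)"
  proof -
    have x1: "[:0,1:] = x" by (simp add: x_def)
    have n1: "n - 1 = Suc (Suc p)" "n - 3 = p" by (simp_all add: n)
    show ?thesis unfolding xx by (simp only: x1 charA n1)
  qed
  finally show ?thesis .
qed

end
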